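(* Let $X$ be a finite set and $t$ a full support transition function. Then $t$ is menu invariant (i.e. the stationary distributions $\nu_A$ of $M_A$ coincide for all $A\in\mathcal{X}_2$) if and only if $t$ satisfies no investment: for every strict investment plan $i$ and every $\delta\in(0,1)$ there exists $\succ\in\mathcal{L}(X)$ such that $$\sum_{(A,\succ')\in\mathcal{X}_2\times\mathcal{L}(X)}\delta\, i(A,\succ')\,t_{\succ'}(M(\succ,A),\succ)<\sum_{A\in\mathcal{X}_2} i(A,\succ).$$
   Context: $X$ is a finite set; $\mathcal{X}_2$ is the collection of subsets of $X$ with at least two elements; $\mathcal{L}(X)$ the linear orders on $X$; $M(\succ,A)$ the $\succ$-maximal element of $A$. A transition function is $t:X\times\mathcal{L}(X)\to\Delta(\mathcal{L}(X))$, full support if all its values have full support; $t_{\succ'}(x,\succ)$ is the probability of $\succ'$ under $t(x,\succ)$. For $A\in\mathcal{X}_2$, $M_A$ is the Markov matrix on $\mathcal{L}(X)$ with entries $m_A(\succ,\succ')=t_{\succ'}(M(\succ,A),\succ)$, which for full support $t$ has a unique stationary distribution $\nu_A$. An investment plan is a function $i:\mathcal{X}_2\times\mathcal{L}(X)\to\mathbb{R}_{\ge 0}$; it is strict if it is not identically zero. *)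

theory Defs
  imports Complex_Main
begin

text \<open>The ground set X is the (finite) universe of the type 'a.
  A linear order \<succ> is a strict linear order r on UNIV, with (x,y) in r meaning x \<succ> y.\<close>

definition lin_orders :: "'a rel set" where
  "lin_orders = {r. strict_linear_order_on UNIV r}"

definition menus2 :: "'a set set" where
  "menus2 = {A. 2 \<le> card A}"

definition maxel :: "'a rel \<Rightarrow> 'a set \<Rightarrow> 'a" where
  "maxel r A = (THE x. x \<in> A \<and> (\<forall>y\<in>A. y \<noteq> x \<longrightarrow> (x, y) \<in> r))"

text \<open>A transition function t : X x L(X) -> Delta(L(X)), where t x r r' is the
  probability of r' under t(x,r).\<close>
definition transition_fun :: "('a \<Rightarrow> 'a rel \<Rightarrow> 'a rel \<Rightarrow> real) \<Rightarrow> bool" where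
  "transition_fun t \<longleftrightarrow> (\<forall>x r. r \<in> lin_orders \<longrightarrow>
      (\<forall>r'\<in>lin_orders. 0 \<le> t x r r') \<and> (\<Sum>r'\<in>lin_orders. t x r r') = 1)"

definition full_support :: "('a \<Rightarrow> 'a rel \<Rightarrow> 'a rel \<Rightarrow> real) \<Rightarrow> bool" where
  "full_support t \<longleftrightarrow> (\<forall>x. \<forall>r\<in>lin_orders. \<forall>r'\<in>lin_orders. 0 < t x r r')"

definition markov_entry :: "('a \<Rightarrow> 'a rel \<Rightarrow> 'a rel \<Rightarrow> real) \<Rightarrow> 'a set \<Rightarrow> 'a rel \<Rightarrow> 'a rel \<Rightarrow> real" where
  "markov_entry t A r r' = t (maxel r A) r r'"

definition stationary :: "('a \<Rightarrow> 'a rel \<Rightarrow> 'a rel \<Rightarrow> real) \<Rightarrow> 'a set \<Rightarrow> ('a rel \<Rightarrow> real) \<Rightarrow> bool" where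
  "stationary t A \<nu> \<longleftrightarrow>
     (\<forall>r. r \<notin> lin_orders \<longrightarrow> \<nu> r = 0) \<and> (\<forall>r\<in>lin_orders. 0 \<le> \<nu> r) \<and>
     (\<Sum>r\<in>lin_orders. \<nu> r) = 1 \<and>
     (\<forall>r'\<in>lin_orders. (\<Sum>r\<in>lin_orders. \<nu> r * markov_entry t A r r') = \<nu> r')"

text \<open>The (unique, for full support t) stationary distribution nu_A.\<close>
definition stat_dist :: "('a \<Rightarrow> 'a rel \<Rightarrow> 'a rel \<Rightarrow> real) \<Rightarrow> 'a set \<Rightarrow> 'a rel \<Rightarrow> real" where
  "stat_dist t A = (THE \<nu>. stationary t A \<nu>)"

definition menu_invariant :: "('a \<Rightarrow> 'a rel \<Rightarrow> 'a rel \<Rightarrow> real) \<Rightarrow> bool" where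
  "menu_invariant t \<longleftrightarrow> (\<forall>A\<in>menus2. \<forall>B\<in>menus2. stat_dist t A = stat_dist t B)"

definition investment_plan :: "('a set \<Rightarrow> 'a rel \<Rightarrow> real) \<Rightarrow> bool" where
  "investment_plan i \<longleftrightarrow> (\<forall>A\<in>menus2. \<forall>r\<in>lin_orders. 0 \<le> i A r)"

definition strict_plan :: "('a set \<Rightarrow> 'a rel \<Rightarrow> real) \<Rightarrow> bool" where
  "strict_plan i \<longleftrightarrow> (\<exists>A\<in>menus2. \<exists>r\<in>lin_orders. i A r \<noteq> 0)"

definition no_investment :: "('a \<Rightarrow> 'a rel \<Rightarrow> 'a rel \<Rightarrow> real) \<Rightarrow> bool" where
  "no_investment t \<longleftrightarrow>
     (\<forall>i. investment_plan i \<and> strict_plan i \<longrightarrow>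
        (\<forall>\<delta>::real. 0 < \<delta> \<and> \<delta> < 1 \<longrightarrow>
           (\<exists>r\<in>lin_orders.
              (\<Sum>A\<in>menus2. \<Sum>r'\<in>lin_orders. \<delta> * i A r' * t (maxel r A) r r')
              < (\<Sum>A\<in>menus2. i A r))))"

end

theory Submission
  imports Defs "HOL-Analysis.Analysis"
begin

lemma swap_sum:
  fixes p :: "'b \<Rightarrow> 'b \<Rightarrow> real"
  shows "(\<Sum>r\<in>L. \<nu> r * (\<Sum>s\<in>L. p r s * x s)) = (\<Sum>s\<in>L. (\<Sum>r\<in>L. \<nu> r * p r s) * x s)"
  unfolding sum_distrib_left sum_distrib_right by (subst sum.swap) (simp add: mult.assoc)

lemma zero_sum_stationary:
  fixes z :: "'b \<Rightarrow> real"
  assumes fin: "finite L" and pos: "\<And>r s. r\<in>L \<Longrightarrow> s\<in>L \<Longrightarrow> 0 < p r s"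
    and row: "\<And>r. r\<in>L \<Longrightarrow> (\<Sum>s\<in>L. p r s) = 1"
    and st: "\<And>s. s\<in>L \<Longrightarrow> (\<Sum>r\<in>L. z r * p r s) = z s"
    and sz: "(\<Sum>r\<in>L. z r) = 0"
  shows "\<forall>r\<in>L. z r = 0"
proof (rule ccontr)
  assume "\<not> ?thesis"
  then obtain r0 where r0: "r0 \<in> L" "z r0 \<noteq> 0" by auto
  have "\<exists>r1\<in>L. z r1 > 0"
  proof (rule ccontr)
    assume "\<not> ?thesis"
    hence "\<forall>r\<in>L. - z r \<ge> 0" by auto
    moreover have "(\<Sum>r\<in>L. - z r) = 0" using sz by (simp add: sum_negf)
    ultimately have "\<forall>r\<in>L. - z r = 0" using sum_nonneg_eq_0_iff[OF fin, of "\<lambda>r. - z r"] by auto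
    thus False using r0 by auto
  qed
  then obtain r1 where r1: "r1\<in>L" "z r1 > 0" by auto
  have "\<exists>r2\<in>L. z r2 < 0"
  proof (rule ccontr)
    assume "\<not> ?thesis"
    hence "\<forall>r\<in>L. z r \<ge> 0" by auto
    hence "\<forall>r\<in>L. z r = 0" using sum_nonneg_eq_0_iff[OF fin, of z] sz by auto
    thus False using r0 by auto
  qed
  then obtain r2 where r2: "r2\<in>L" "z r2 < 0" by auto
  have strict: "\<bar>z s\<bar> < (\<Sum>r\<in>L. \<bar>z r\<bar> * p r s)" if s: "s\<in>L" for s
  proof (cases "z s \<ge> 0")
    case True
    have "0 < (\<Sum>r\<in>L. (\<bar>z r\<bar> - z r) * p r s)"
      apply (rule sum_pos2[OF fin r2(1)])
      subgoal using r2 pos[OF r2(1) s] by (intro mult_pos_pos) auto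
      subgoal for i using pos[OF _ s, of i] by (intro mult_nonneg_nonneg) auto
      done
    also have "\<dots> = (\<Sum>r\<in>L. \<bar>z r\<bar> * p r s) - z s"
      using st[OF s] by (simp add: left_diff_distrib sum_subtractf)
    finally show ?thesis using True by simp
  next
    case False
    have "0 < (\<Sum>r\<in>L. (\<bar>z r\<bar> + z r) * p r s)"
      apply (rule sum_pos2[OF fin r1(1)])
      subgoal using r1 pos[OF r1(1) s] by (intro mult_pos_pos) auto
      subgoal for i using pos[OF _ s, of i] by (intro mult_nonneg_nonneg) auto
      done
    also have "\<dots> = (\<Sum>r\<in>L. \<bar>z r\<bar> * p r s) + z s"
      using st[OF s] by (simp add: distrib_right sum.distrib)
    finally show ?thesis using False by simp
  qed
  have "(\<Sum>s\<in>L. \<bar>z s\<bar>) < (\<Sum>s\<in>L. \<Sum>r\<in>L. \<bar>z r\<bar> * p r s)"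
    by (rule sum_strict_mono[OF fin]) (use r0 strict in auto)
  also have "\<dots> = (\<Sum>r\<in>L. \<bar>z r\<bar> * (\<Sum>s\<in>L. p r s))"
    unfolding sum_distrib_left by (rule sum.swap)
  also have "\<dots> = (\<Sum>r\<in>L. \<bar>z r\<bar>)" using row by simp
  finally show False by simp
qed

lemma abs_stationary:
  fixes y :: "'b \<Rightarrow> real"
  assumes fin: "finite L" and pos: "\<And>r s. r\<in>L \<Longrightarrow> s\<in>L \<Longrightarrow> 0 < p r s"
    and row: "\<And>r. r\<in>L \<Longrightarrow> (\<Sum>s\<in>L. p r s) = 1"
    and st: "\<And>s. s\<in>L \<Longrightarrow> (\<Sum>r\<in>L. y r * p r s) = y s"
  shows "\<forall>s\<in>L. (\<Sum>r\<in>L. \<bar>y r\<bar> * p r s) = \<bar>y s\<bar>"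
proof -
  have ge: "\<bar>y s\<bar> \<le> (\<Sum>r\<in>L. \<bar>y r\<bar> * p r s)" if s: "s\<in>L" for s
  proof -
    have "\<bar>y s\<bar> = \<bar>\<Sum>r\<in>L. y r * p r s\<bar>" using st[OF s] by simp
    also have "\<dots> \<le> (\<Sum>r\<in>L. \<bar>y r * p r s\<bar>)" by (rule sum_abs)
    also have "\<dots> = (\<Sum>r\<in>L. \<bar>y r\<bar> * p r s)"
      using pos[OF _ s] by (intro sum.cong) (auto simp: abs_mult less_imp_le)
    finally show ?thesis .
  qed
  have "(\<Sum>s\<in>L. (\<Sum>r\<in>L. \<bar>y r\<bar> * p r s) - \<bar>y s\<bar>)
      = (\<Sum>r\<in>L. \<bar>y r\<bar> * (\<Sum>s\<in>L. p r s)) - (\<Sum>s\<in>L. \<bar>y s\<bar>)"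
    unfolding sum_subtractf sum_distrib_left by (subst sum.swap) simp
  also have "\<dots> = 0" using row by simp
  finally have "\<forall>s\<in>L. (\<Sum>r\<in>L. \<bar>y r\<bar> * p r s) - \<bar>y s\<bar> = 0"
    using sum_nonneg_eq_0_iff[OF fin, of "\<lambda>s. (\<Sum>r\<in>L. \<bar>y r\<bar> * p r s) - \<bar>y s\<bar>"] ge by (simp)
  thus ?thesis by simp
qed

lemma exists_stationary:
  fixes p :: "'b::finite \<Rightarrow> 'b \<Rightarrow> real"
  assumes ne: "L \<noteq> {}" and pos: "\<And>r s. r\<in>L \<Longrightarrow> s\<in>L \<Longrightarrow> 0 < p r s"
    and row: "\<And>r. r\<in>L \<Longrightarrow> (\<Sum>s\<in>L. p r s) = 1"
  shows "\<exists>\<nu>. (\<forall>r. r\<notin>L \<longrightarrow> \<nu> r = 0) \<and> (\<forall>r\<in>L. 0 \<le> \<nu> r) \<and> (\<Sum>r\<in>L. \<nu> r) = 1 \<and>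
     (\<forall>s\<in>L. (\<Sum>r\<in>L. \<nu> r * p r s) = \<nu> s)"
proof -
  have fin: "finite L" by simp
  define G :: "real^'b \<Rightarrow> real^'b"
    where "G y = (\<chi> s. if s\<in>L then (\<Sum>r\<in>L. y$r * p r s) - y$s else y$s)" for y
  have lin: "linear G"
    by (rule linearI) (auto simp: G_def vec_eq_iff sum.distrib sum_distrib_left algebra_simps)
  obtain s0 where s0: "s0\<in>L" using ne by auto
  have "\<not> surj G"
  proof
    assume "surj G"
    then obtain y where y: "G y = axis s0 1" by (metis surjD)
    have "(\<Sum>s\<in>L. G y $ s) = (\<Sum>s\<in>L. \<Sum>r\<in>L. y$r * p r s) - (\<Sum>s\<in>L. y$s)"
      by (simp add: G_def sum_subtractf)
    also have "(\<Sum>s\<in>L. \<Sum>r\<in>L. y$r * p r s) = (\<Sum>r\<in>L. y$r * (\<Sum>s\<in>L. p r s))"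
      unfolding sum_distrib_left by (rule sum.swap)
    also have "\<dots> = (\<Sum>r\<in>L. y$r)" using row by simp
    finally have "(\<Sum>s\<in>L. G y $ s) = 0" by simp
    moreover have "(\<Sum>s\<in>L. axis s0 1 $ s) = (1::real)" using s0 fin
      by (simp add: axis_def)
    ultimately show False using y by simp
  qed
  hence "\<not> inj G" using linear_inj_imp_surj[OF lin] by blast
  then obtain y where y0: "y \<noteq> 0" and Gy: "G y = 0" using linear_injective_0[OF lin] by blast
  have off: "y$s = 0" if "s \<notin> L" for s
  proof -
    have "G y $ s = 0" using Gy by simp
    thus ?thesis using that by (simp add: G_def)
  qed
  have st: "(\<Sum>r\<in>L. y$r * p r s) = y$s" if "s \<in> L" for s
  proof -
    have "G y $ s = 0" using Gy by simp
    thus ?thesis using that by (simp add: G_def)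
  qed
  obtain s1 where s1: "y$s1 \<noteq> 0" using y0 by (metis vec_eq_iff zero_index)
  have s1L: "s1 \<in> L" using off s1 by blast
  have abs_st: "\<forall>s\<in>L. (\<Sum>r\<in>L. \<bar>y$r\<bar> * p r s) = \<bar>y$s\<bar>"
    by (rule abs_stationary[OF fin pos row, where y = "\<lambda>r. y$r"]) (use st in auto)
  define S where "S = (\<Sum>r\<in>L. \<bar>y$r\<bar>)"
  have Spos: "S > 0" unfolding S_def by (rule sum_pos2[OF fin s1L]) (use s1 in auto)
  define \<nu> where "\<nu> r = (if r\<in>L then \<bar>y$r\<bar> / S else 0)" for r
  have "(\<Sum>r\<in>L. \<nu> r) = (\<Sum>r\<in>L. \<bar>y$r\<bar> / S)" by (rule sum.cong) (auto simp: \<nu>_def)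
  also have "\<dots> = 1" using Spos by (simp add: sum_divide_distrib[symmetric] S_def)
  finally have sum1: "(\<Sum>r\<in>L. \<nu> r) = 1" .
  have "(\<Sum>r\<in>L. \<nu> r * p r s) = \<nu> s" if s: "s\<in>L" for s
  proof -
    have "(\<Sum>r\<in>L. \<nu> r * p r s) = (\<Sum>r\<in>L. \<bar>y$r\<bar> * p r s) / S"
      by (simp add: sum_divide_distrib \<nu>_def)
    also have "\<dots> = \<nu> s" using abs_st s by (simp add: \<nu>_def)
    finally show ?thesis .
  qed
  thus ?thesis using sum1 Spos by (intro exI[of _ \<nu>]) (auto simp: \<nu>_def)
qed

lemma poisson:
  fixes p :: "'b::finite \<Rightarrow> 'b \<Rightarrow> real"
  assumes pos: "\<And>r s. r\<in>L \<Longrightarrow> s\<in>L \<Longrightarrow> 0 < p r s"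
    and row: "\<And>r. r\<in>L \<Longrightarrow> (\<Sum>s\<in>L. p r s) = 1"
    and nsum: "(\<Sum>r\<in>L. \<nu> r) = 1"
    and nst: "\<And>s. s\<in>L \<Longrightarrow> (\<Sum>r\<in>L. \<nu> r * p r s) = \<nu> s"
    and u: "(\<Sum>r\<in>L. \<nu> r * u r) = 0"
  shows "\<exists>x. \<forall>r\<in>L. (\<Sum>s\<in>L. p r s * x s) - x r = u r"
proof -
  have fin: "finite L" by simp
  have key: "(\<Sum>r\<in>L. \<nu> r * (x r - (\<Sum>s\<in>L. p r s * x s))) = 0" for x :: "'b \<Rightarrow> real"
  proof -
    have "(\<Sum>r\<in>L. \<nu> r * (x r - (\<Sum>s\<in>L. p r s * x s)))
        = (\<Sum>r\<in>L. \<nu> r * x r) - (\<Sum>r\<in>L. \<nu> r * (\<Sum>s\<in>L. p r s * x s))"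
      by (simp add: right_diff_distrib sum_subtractf)
    also have "(\<Sum>r\<in>L. \<nu> r * (\<Sum>s\<in>L. p r s * x s)) = (\<Sum>s\<in>L. (\<Sum>r\<in>L. \<nu> r * p r s) * x s)"
      by (rule swap_sum)
    also have "\<dots> = (\<Sum>s\<in>L. \<nu> s * x s)" using nst by simp
    finally show ?thesis by simp
  qed
  define H :: "real^'b \<Rightarrow> real^'b"
    where "H x = (\<chi> r. if r\<in>L then x$r - (\<Sum>s\<in>L. p r s * x$s) + (\<Sum>s\<in>L. \<nu> s * x$s) else x$r)" for x
  have lin: "linear H"
    by (rule linearI) (auto simp: H_def vec_eq_iff sum.distrib sum_distrib_left algebra_simps)
  have cz: "(\<Sum>s\<in>L. \<nu> s * x$s) = (\<Sum>r\<in>L. \<nu> r * w r)"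
    if h: "\<forall>r\<in>L. x$r - (\<Sum>s\<in>L. p r s * x$s) + (\<Sum>s\<in>L. \<nu> s * x$s) = w r" for x w
  proof -
    define c where "c = (\<Sum>s\<in>L. \<nu> s * x$s)"
    have "(\<Sum>r\<in>L. \<nu> r * w r) = (\<Sum>r\<in>L. \<nu> r * (x$r - (\<Sum>s\<in>L. p r s * x$s)) + \<nu> r * c)"
    proof (rule sum.cong[OF refl])
      fix r assume r: "r \<in> L"
      have "w r = (x$r - (\<Sum>s\<in>L. p r s * x$s)) + c" using h r unfolding c_def by simp
      thus "\<nu> r * w r = \<nu> r * (x$r - (\<Sum>s\<in>L. p r s * x$s)) + \<nu> r * c" by (simp only: distrib_left)
    qed
    also have "\<dots> = (\<Sum>r\<in>L. \<nu> r * (x$r - (\<Sum>s\<in>L. p r s * x$s))) + c * (\<Sum>r\<in>L. \<nu> r)"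
      by (simp add: sum.distrib sum_distrib_left sum_distrib_right mult.commute)
    also have "\<dots> = c" using key[of "\<lambda>r. x$r"] nsum by simp
    finally show ?thesis by (simp add: c_def)
  qed
  have "inj H"
    unfolding linear_injective_0[OF lin]
  proof (intro allI impI)
    fix x assume Hx: "H x = 0"
    have off: "x$s = 0" if "s \<notin> L" for s
    proof -
      have "H x $ s = 0" using Hx by simp
      thus ?thesis using that by (simp add: H_def)
    qed
    have h: "\<forall>r\<in>L. x$r - (\<Sum>s\<in>L. p r s * x$s) + (\<Sum>s\<in>L. \<nu> s * x$s) = 0"
    proof
      fix r assume r: "r \<in> L"
      have "H x $ r = 0" using Hx by simp
      thus "x$r - (\<Sum>s\<in>L. p r s * x$s) + (\<Sum>s\<in>L. \<nu> s * x$s) = 0" using r by (simp add: H_def)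
    qed
    have c0: "(\<Sum>s\<in>L. \<nu> s * x$s) = 0" using cz[OF h] by simp
    have fxp: "x$r = (\<Sum>s\<in>L. p r s * x$s)" if "r\<in>L" for r using h c0 that by auto
    show "x = 0"
    proof (cases "L = {}")
      case True thus ?thesis using off by (simp add: vec_eq_iff)
    next
      case False
      define m where "m = Max ((\<lambda>r. x$r) ` L)"
      have "m \<in> (\<lambda>r. x$r) ` L" unfolding m_def using False fin by (intro Max_in) auto
      then obtain rm where rm: "rm \<in> L" "x$rm = m" by force
      have le: "x$s \<le> m" if "s\<in>L" for s unfolding m_def using fin that by (intro Max_ge) auto
      have "(\<Sum>s\<in>L. p rm s * (m - x$s)) = m * (\<Sum>s\<in>L. p rm s) - (\<Sum>s\<in>L. p rm s * x$s)"
        by (simp add: right_diff_distrib sum_subtractf sum_distrib_left mult.commute)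
      also have "\<dots> = 0" using row[OF rm(1)] fxp[OF rm(1)] rm(2) by simp
      finally have "\<forall>s\<in>L. p rm s * (m - x$s) = 0"
        using sum_nonneg_eq_0_iff[OF fin, of "\<lambda>s. p rm s * (m - x$s)"] le pos[OF rm(1)]
        by (simp add: less_imp_le)
      hence const: "x$s = m" if "s\<in>L" for s using that pos[OF rm(1) that] by auto
      have "(\<Sum>s\<in>L. \<nu> s * x$s) = (\<Sum>s\<in>L. \<nu> s * m)" using const by (intro sum.cong) auto
      also have "\<dots> = m" using nsum by (simp add: sum_distrib_right[symmetric])
      finally have "(\<Sum>s\<in>L. \<nu> s * x$s) = m" .
      hence "m = 0" using c0 by simp
      thus "x = 0" using const off by (auto simp: vec_eq_iff)
    qed
  qed
  hence "surj H" using linear_inj_imp_surj[OF lin] by blast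
  then obtain x where x: "H x = (\<chi> r. if r\<in>L then - u r else 0)" by (metis surjD)
  have h: "\<forall>r\<in>L. x$r - (\<Sum>s\<in>L. p r s * x$s) + (\<Sum>s\<in>L. \<nu> s * x$s) = - u r"
  proof
    fix r assume r: "r \<in> L"
    have "H x $ r = - u r" using x r by simp
    thus "x$r - (\<Sum>s\<in>L. p r s * x$s) + (\<Sum>s\<in>L. \<nu> s * x$s) = - u r" using r by (simp add: H_def)
  qed
  have c0: "(\<Sum>s\<in>L. \<nu> s * x$s) = 0" using cz[OF h] u by (simp add: sum_negf)
  show ?thesis using h c0 by (intro exI[of _ "\<lambda>s. x$s"]) auto
qed

lemma lin_fin: "finite (lin_orders :: ('a::finite) rel set)" by simp

lemma lin_ne: "lin_orders \<noteq> {}"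
proof -
  obtain r :: "'a rel" where "strict_linear_order_on UNIV r"
    by (meson well_order_on well_order_on_def strict_linear_order_on_diff_Id)
  thus ?thesis unfolding lin_orders_def by auto
qed

lemma tpos:
  assumes "full_support t" "r \<in> lin_orders" "s \<in> lin_orders"
  shows "0 < t x r s"
  using assms unfolding full_support_def by (elim allE ballE) auto

lemma trow:
  assumes "transition_fun t" "r \<in> lin_orders"
  shows "(\<Sum>s\<in>lin_orders. t x r s) = 1"
  using assms unfolding transition_fun_def by (elim allE) auto

lemma stat_exists:
  fixes t :: "'a::finite \<Rightarrow> 'a rel \<Rightarrow> 'a rel \<Rightarrow> real"
  assumes tf: "transition_fun t" and fs: "full_support t"
  shows "stationary t A (stat_dist t A)"
proof -
  let ?L = "lin_orders :: 'a rel set"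
  let ?p = "\<lambda>r s. t (maxel r A) r s"
  have pos: "\<And>r s. r\<in>?L \<Longrightarrow> s\<in>?L \<Longrightarrow> 0 < ?p r s" by (rule tpos[OF fs])
  have row: "\<And>r. r\<in>?L \<Longrightarrow> (\<Sum>s\<in>?L. ?p r s) = 1" by (rule trow[OF tf])
  have ex: "\<exists>\<nu>. (\<forall>r. r\<notin>?L \<longrightarrow> \<nu> r = 0) \<and> (\<forall>r\<in>?L. 0 \<le> \<nu> r) \<and> (\<Sum>r\<in>?L. \<nu> r) = 1 \<and>
     (\<forall>s\<in>?L. (\<Sum>r\<in>?L. \<nu> r * ?p r s) = \<nu> s)"
    using exists_stationary[where p = "\<lambda>r s. t (maxel r A) r s", OF lin_ne pos row] by simp
  obtain \<nu> where nu: "(\<forall>r. r\<notin>?L \<longrightarrow> \<nu> r = 0) \<and> (\<forall>r\<in>?L. 0 \<le> \<nu> r) \<and> (\<Sum>r\<in>?L. \<nu> r) = 1 \<and>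
     (\<forall>s\<in>?L. (\<Sum>r\<in>?L. \<nu> r * ?p r s) = \<nu> s)"
    using ex by (elim exE) (rule that)
  have st: "stationary t A \<nu>" using nu unfolding stationary_def markov_entry_def by blast
  have uniq: "\<mu> = \<nu>" if "stationary t A \<mu>" for \<mu>
  proof -
    have m: "(\<forall>r. r\<notin>?L \<longrightarrow> \<mu> r = 0) \<and> (\<Sum>r\<in>?L. \<mu> r) = 1 \<and>
     (\<forall>s\<in>?L. (\<Sum>r\<in>?L. \<mu> r * ?p r s) = \<mu> s)"
      using that unfolding stationary_def markov_entry_def by blast
    have "\<forall>r\<in>?L. \<mu> r - \<nu> r = 0"
      apply (rule zero_sum_stationary[where p = "\<lambda>r s. t (maxel r A) r s" and L = ?L and z = "\<lambda>r. \<mu> r - \<nu> r"])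
      subgoal by (rule lin_fin)
      subgoal by (rule pos)
      subgoal by (rule row)
      subgoal for s using m nu by (simp add: left_diff_distrib sum_subtractf)
      subgoal using m nu by (simp add: sum_subtractf)
      done
    note z = this
    show ?thesis
    proof (rule ext)
      fix r show "\<mu> r = \<nu> r" using m nu z by (cases "r \<in> ?L") auto
    qed
  qed
  have "stationary t A (THE \<nu>. stationary t A \<nu>)"
    by (rule theI[of "stationary t A" \<nu>, OF st uniq])
  thus ?thesis unfolding stat_dist_def .
qed

lemma stat_pos:
  fixes t :: "'a::finite \<Rightarrow> 'a rel \<Rightarrow> 'a rel \<Rightarrow> real"
  assumes fs: "full_support t" and st: "stationary t A \<nu>" and s: "s \<in> lin_orders"
  shows "0 < \<nu> s"
proof -
  let ?L = "lin_orders :: 'a rel set"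
  have n: "(\<forall>r\<in>?L. 0 \<le> \<nu> r) \<and> (\<Sum>r\<in>?L. \<nu> r) = 1 \<and>
     (\<forall>s\<in>?L. (\<Sum>r\<in>?L. \<nu> r * t (maxel r A) r s) = \<nu> s)"
    using st unfolding stationary_def markov_entry_def by blast
  obtain r1 where r1: "r1 \<in> ?L" "\<nu> r1 > 0"
  proof (rule ccontr)
    assume "\<not> thesis"
    have "\<forall>r\<in>?L. \<nu> r = 0"
    proof
      fix r assume r: "r \<in> ?L"
      have "\<not> \<nu> r > 0" using that[OF r] \<open>\<not> thesis\<close> by blast
      thus "\<nu> r = 0" using n r by force
    qed
    thus False using n by simp
  qed
  have "0 < (\<Sum>r\<in>?L. \<nu> r * t (maxel r A) r s)"
    apply (rule sum_pos2[OF lin_fin r1(1)])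
    subgoal using r1 tpos[OF fs r1(1) s] by simp
    subgoal for r using n tpos[OF fs _ s, of r] by (simp add: less_imp_le)
    done
  thus ?thesis using n s by simp
qed

theorem theorem2:
  fixes t :: "'a::finite \<Rightarrow> 'a rel \<Rightarrow> 'a rel \<Rightarrow> real"
  assumes "transition_fun t" and "full_support t"
  shows "menu_invariant t \<longleftrightarrow> no_investment t"
proof
  have tf: "transition_fun t" and fs: "full_support t" using assms by auto
  let ?L = "lin_orders :: 'a rel set"
  let ?M = "menus2 :: 'a set set"
  have pos: "0 < t (maxel r C) r s" if "r \<in> ?L" "s \<in> ?L" for r s C by (rule tpos[OF fs that])
  have row: "(\<Sum>s\<in>?L. t (maxel r C) r s) = 1" if "r \<in> ?L" for r C by (rule trow[OF tf that])
  have stfacts: "(\<forall>r. r\<notin>?L \<longrightarrow> \<nu> r = 0) \<and> (\<forall>r\<in>?L. 0 \<le> \<nu> r) \<and> (\<Sum>r\<in>?L. \<nu> r) = 1 \<and>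
     (\<forall>s\<in>?L. (\<Sum>r\<in>?L. \<nu> r * t (maxel r C) r s) = \<nu> s)" if "stationary t C \<nu>" for C \<nu>
    using that unfolding stationary_def markov_entry_def by blast
  show "no_investment t" if mi: "menu_invariant t"
    unfolding no_investment_def
  proof (intro allI impI)
    fix i :: "'a set \<Rightarrow> 'a rel \<Rightarrow> real" and \<delta> :: real
    assume ip: "investment_plan i \<and> strict_plan i" and d: "0 < \<delta> \<and> \<delta> < 1"
    obtain A0 r0 where A0: "A0 \<in> ?M" and r0: "r0 \<in> ?L" and ne0: "i A0 r0 \<noteq> 0"
      using ip unfolding strict_plan_def by blast
    have inn: "0 \<le> i C r" if "C \<in> ?M" "r \<in> ?L" for C r
      using ip that unfolding investment_plan_def by blast
    define \<nu> where "\<nu> = stat_dist t A0"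
    have stC: "stationary t C \<nu>" if "C \<in> ?M" for C
    proof -
      have "stat_dist t C = \<nu>" using mi that A0 unfolding menu_invariant_def \<nu>_def by blast
      thus ?thesis using stat_exists[OF tf fs, of C] by simp
    qed
    have nst: "(\<Sum>r\<in>?L. \<nu> r * t (maxel r C) r s) = \<nu> s" if "C \<in> ?M" "s \<in> ?L" for C s
      using stfacts[OF stC[OF that(1)]] that(2) by blast
    have npos: "0 < \<nu> r" if "r \<in> ?L" for r by (rule stat_pos[OF fs stC[OF A0] that])
    show "\<exists>r\<in>?L. (\<Sum>A\<in>?M. \<Sum>r'\<in>?L. \<delta> * i A r' * t (maxel r A) r r') < (\<Sum>A\<in>?M. i A r)"
    proof (rule ccontr)
      assume "\<not> ?thesis"
      hence ge: "(\<Sum>A\<in>?M. i A r) \<le> (\<Sum>A\<in>?M. \<Sum>r'\<in>?L. \<delta> * i A r' * t (maxel r A) r r')"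
        if "r \<in> ?L" for r using that by (simp add: not_less)
      define D where "D = (\<Sum>C\<in>?M. \<Sum>r'\<in>?L. i C r' * \<nu> r')"
      have Dpos: "0 < D" unfolding D_def
      proof (rule sum_pos2[OF _ A0])
        show "finite ?M" by simp
        show "0 < (\<Sum>r'\<in>?L. i A0 r' * \<nu> r')"
        proof (rule sum_pos2[OF lin_fin r0])
          show "0 < i A0 r0 * \<nu> r0" using inn[OF A0 r0] ne0 npos[OF r0] by simp
          show "0 \<le> i A0 r' * \<nu> r'" if "r' \<in> ?L" for r'
            using inn[OF A0 that] npos[OF that] by simp
        qed
        show "0 \<le> (\<Sum>r'\<in>?L. i C r' * \<nu> r')" if "C \<in> ?M" for C
          using inn[OF that] npos by (intro sum_nonneg) (simp add: less_imp_le)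
      qed
      have e1: "(\<Sum>r\<in>?L. \<nu> r * (\<Sum>A\<in>?M. i A r)) = D"
        unfolding D_def sum_distrib_left by (subst sum.swap) (simp add: mult.commute)
      have "(\<Sum>r\<in>?L. \<nu> r * (\<Sum>A\<in>?M. \<Sum>r'\<in>?L. \<delta> * i A r' * t (maxel r A) r r'))
          = (\<Sum>r\<in>?L. \<Sum>A\<in>?M. \<Sum>r'\<in>?L. \<delta> * i A r' * (\<nu> r * t (maxel r A) r r'))"
        by (simp add: sum_distrib_left mult_ac)
      also have "\<dots> = (\<Sum>A\<in>?M. \<Sum>r'\<in>?L. \<Sum>r\<in>?L. \<delta> * i A r' * (\<nu> r * t (maxel r A) r r'))"
        by (subst sum.swap) (rule sum.cong[OF refl], rule sum.swap)
      also have "\<dots> = (\<Sum>A\<in>?M. \<Sum>r'\<in>?L. \<delta> * i A r' * \<nu> r')"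
        by (intro sum.cong refl) (simp add: sum_distrib_left[symmetric] nst)
      also have "\<dots> = \<delta> * D" by (simp add: D_def sum_distrib_left mult_ac)
      finally have e2: "(\<Sum>r\<in>?L. \<nu> r * (\<Sum>A\<in>?M. \<Sum>r'\<in>?L. \<delta> * i A r' * t (maxel r A) r r')) = \<delta> * D" .
      have "(\<Sum>r\<in>?L. \<nu> r * (\<Sum>A\<in>?M. i A r))
          \<le> (\<Sum>r\<in>?L. \<nu> r * (\<Sum>A\<in>?M. \<Sum>r'\<in>?L. \<delta> * i A r' * t (maxel r A) r r'))"
        by (rule sum_mono) (use ge npos in \<open>simp add: mult_left_mono less_imp_le\<close>)
      hence "D \<le> \<delta> * D" using e1 e2 by simp
      thus False using Dpos d by (simp add: mult_le_cancel_right1)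
    qed
  qed
  show "menu_invariant t" if ni: "no_investment t"
  proof (rule ccontr)
    assume "\<not> menu_invariant t"
    then obtain A B where A: "A \<in> ?M" and B: "B \<in> ?M" and neq: "stat_dist t A \<noteq> stat_dist t B"
      unfolding menu_invariant_def by blast
    define \<nu>A where "\<nu>A = stat_dist t A"
    define \<nu>B where "\<nu>B = stat_dist t B"
    have fA: "(\<forall>r. r\<notin>?L \<longrightarrow> \<nu>A r = 0) \<and> (\<forall>r\<in>?L. 0 \<le> \<nu>A r) \<and> (\<Sum>r\<in>?L. \<nu>A r) = 1 \<and>
     (\<forall>s\<in>?L. (\<Sum>r\<in>?L. \<nu>A r * t (maxel r A) r s) = \<nu>A s)"
      unfolding \<nu>A_def by (rule stfacts[OF stat_exists[OF tf fs]])
    have fB: "(\<forall>r. r\<notin>?L \<longrightarrow> \<nu>B r = 0) \<and> (\<forall>r\<in>?L. 0 \<le> \<nu>B r) \<and> (\<Sum>r\<in>?L. \<nu>B r) = 1 \<and>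
     (\<forall>s\<in>?L. (\<Sum>r\<in>?L. \<nu>B r * t (maxel r B) r s) = \<nu>B s)"
      unfolding \<nu>B_def by (rule stfacts[OF stat_exists[OF tf fs]])
    have AB: "A \<noteq> B" using neq by blast
    obtain r0 where r0ne: "\<nu>A r0 \<noteq> \<nu>B r0" using neq unfolding \<nu>A_def \<nu>B_def by (auto simp: fun_eq_iff)
    have r0: "r0 \<in> ?L"
    proof (rule ccontr)
      assume "r0 \<notin> ?L"
      hence "\<nu>A r0 = 0" "\<nu>B r0 = 0" using fA fB by blast+
      thus False using r0ne by simp
    qed
    define d where "d = \<nu>B r0 - \<nu>A r0"
    have d0: "d \<noteq> 0" using r0ne by (simp add: d_def)
    define k where "k = 1 / d"
    define e :: "'a rel \<Rightarrow> real" where "e r = (if r = r0 then 1 else 0)" for r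
    define uA where "uA r = (e r - \<nu>A r0) * k" for r
    define uB where "uB r = 1 - uA r" for r
    have gen: "(\<Sum>r\<in>?L. \<nu> r * uA r) = (\<nu> r0 - \<nu>A r0) * k" if "(\<Sum>r\<in>?L. \<nu> r) = 1" for \<nu>
    proof -
      have "(\<Sum>r\<in>?L. \<nu> r * uA r) = (\<Sum>r\<in>?L. k * (\<nu> r * e r) - (k * \<nu>A r0) * \<nu> r)"
        by (rule sum.cong) (auto simp: uA_def algebra_simps)
      also have "\<dots> = k * (\<Sum>r\<in>?L. \<nu> r * e r) - (k * \<nu>A r0) * (\<Sum>r\<in>?L. \<nu> r)"
        by (simp add: sum_subtractf sum_distrib_left)
      also have "(\<Sum>r\<in>?L. \<nu> r * e r) = (\<Sum>r\<in>?L. if r = r0 then \<nu> r else 0)"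
        by (rule sum.cong) (auto simp: e_def)
      also have "\<dots> = \<nu> r0" using r0 by simp
      finally show ?thesis using that by (simp add: algebra_simps)
    qed
    have sA: "(\<Sum>r\<in>?L. \<nu>A r * uA r) = 0" using gen fA by simp
    have sB: "(\<Sum>r\<in>?L. \<nu>B r * uB r) = 0"
    proof -
      have "(\<Sum>r\<in>?L. \<nu>B r * uB r) = (\<Sum>r\<in>?L. \<nu>B r) - (\<Sum>r\<in>?L. \<nu>B r * uA r)"
        by (simp add: uB_def right_diff_distrib sum_subtractf)
      also have "\<dots> = 1 - d * k" using gen fB by (simp add: d_def)
      also have "\<dots> = 0" using d0 by (simp add: k_def)
      finally show ?thesis .
    qed
    obtain xA where xA: "\<forall>r\<in>?L. (\<Sum>s\<in>?L. t (maxel r A) r s * xA s) - xA r = uA r"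
    proof -
      have "\<exists>x. \<forall>r\<in>?L. (\<Sum>s\<in>?L. t (maxel r A) r s * x s) - x r = uA r"
        apply (rule poisson[where p = "\<lambda>r s. t (maxel r A) r s" and L = ?L and \<nu> = \<nu>A and u = uA])
        subgoal by (rule pos)
        subgoal by (rule row)
        subgoal using fA by blast
        subgoal using fA by blast
        subgoal by (rule sA)
        done
      thus ?thesis using that by blast
    qed
    obtain xB where xB: "\<forall>r\<in>?L. (\<Sum>s\<in>?L. t (maxel r B) r s * xB s) - xB r = uB r"
    proof -
      have "\<exists>x. \<forall>r\<in>?L. (\<Sum>s\<in>?L. t (maxel r B) r s * x s) - x r = uB r"
        apply (rule poisson[where p = "\<lambda>r s. t (maxel r B) r s" and L = ?L and \<nu> = \<nu>B and u = uB])
        subgoal by (rule pos)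
        subgoal by (rule row)
        subgoal using fB by blast
        subgoal using fB by blast
        subgoal by (rule sB)
        done
      thus ?thesis using that by blast
    qed
    define vA where "vA r = xA r + ((\<Sum>s\<in>?L. \<bar>xA s\<bar>) + 1)" for r
    define vB where "vB r = xB r + ((\<Sum>s\<in>?L. \<bar>xB s\<bar>) + 1)" for r
    have vA1: "1 \<le> vA r" if "r \<in> ?L" for r
    proof -
      have "\<bar>xA r\<bar> \<le> (\<Sum>s\<in>?L. \<bar>xA s\<bar>)" by (rule member_le_sum[OF that]) auto
      thus ?thesis unfolding vA_def by linarith
    qed
    have vB1: "1 \<le> vB r" if "r \<in> ?L" for r
    proof -
      have "\<bar>xB r\<bar> \<le> (\<Sum>s\<in>?L. \<bar>xB s\<bar>)" by (rule member_le_sum[OF that]) auto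
      thus ?thesis unfolding vB_def by linarith
    qed
    have eqA: "(\<Sum>s\<in>?L. t (maxel r A) r s * vA s) = vA r + uA r" if "r \<in> ?L" for r
    proof -
      have "(\<Sum>s\<in>?L. t (maxel r A) r s * vA s) = (\<Sum>s\<in>?L. t (maxel r A) r s * xA s)
          + (\<Sum>s\<in>?L. t (maxel r A) r s) * ((\<Sum>s\<in>?L. \<bar>xA s\<bar>) + 1)"
        by (simp add: vA_def distrib_left sum.distrib sum_distrib_right)
      moreover have "(\<Sum>s\<in>?L. t (maxel r A) r s * xA s) - xA r = uA r" using xA that by blast
      ultimately show ?thesis using row[OF that] by (simp add: vA_def)
    qed
    have eqB: "(\<Sum>s\<in>?L. t (maxel r B) r s * vB s) = vB r + uB r" if "r \<in> ?L" for r
    proof -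
      have "(\<Sum>s\<in>?L. t (maxel r B) r s * vB s) = (\<Sum>s\<in>?L. t (maxel r B) r s * xB s)
          + (\<Sum>s\<in>?L. t (maxel r B) r s) * ((\<Sum>s\<in>?L. \<bar>xB s\<bar>) + 1)"
        by (simp add: vB_def distrib_left sum.distrib sum_distrib_right)
      moreover have "(\<Sum>s\<in>?L. t (maxel r B) r s * xB s) - xB r = uB r" using xB that by blast
      ultimately show ?thesis using row[OF that] by (simp add: vB_def)
    qed
    define i where "i C r = (if C = A then vA r else 0) + (if C = B then vB r else 0)" for C r
    define w where "w r = vA r + vB r" for r
    define W where "W = (\<Sum>r\<in>?L. w r)"
    have wpos: "0 < w r" if "r \<in> ?L" for r using vA1[OF that] vB1[OF that] by (simp add: w_def)
    have Wpos: "0 < W" unfolding W_def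
      by (rule sum_pos2[where f = w, OF lin_fin r0 wpos[OF r0]]) (simp add: wpos less_imp_le)
    have wle: "w r \<le> W" if "r \<in> ?L" for r
      unfolding W_def by (rule member_le_sum[OF that]) (simp_all add: wpos less_imp_le)
    define \<delta> where "\<delta> = W / (W + 1)"
    have d01: "0 < \<delta> \<and> \<delta> < 1" using Wpos by (simp add: \<delta>_def)
    have plan: "investment_plan i"
      unfolding investment_plan_def i_def using vA1 vB1 by (auto intro: add_nonneg_nonneg order_trans[OF zero_le_one])
    have strict: "strict_plan i"
      unfolding strict_plan_def using A r0 vA1[OF r0] AB by (intro bexI[of _ A] bexI[of _ r0]) (auto simp: i_def)
    obtain r where r: "r \<in> ?L"
      and lt: "(\<Sum>C\<in>?M. \<Sum>r'\<in>?L. \<delta> * i C r' * t (maxel r C) r r') < (\<Sum>C\<in>?M. i C r)"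
      using ni plan strict d01 unfolding no_investment_def by blast
    have rhs: "(\<Sum>C\<in>?M. i C r) = w r"
      using A B by (simp add: i_def sum.distrib w_def)
    have "(\<Sum>C\<in>?M. \<Sum>r'\<in>?L. \<delta> * i C r' * t (maxel r C) r r')
        = (\<Sum>C\<in>?M. (if C = A then \<delta> * (\<Sum>s\<in>?L. t (maxel r A) r s * vA s) else 0)
                   + (if C = B then \<delta> * (\<Sum>s\<in>?L. t (maxel r B) r s * vB s) else 0))"
    proof (rule sum.cong[OF refl])
      fix C assume "C \<in> ?M"
      show "(\<Sum>r'\<in>?L. \<delta> * i C r' * t (maxel r C) r r')
        = (if C = A then \<delta> * (\<Sum>s\<in>?L. t (maxel r A) r s * vA s) else 0)
                   + (if C = B then \<delta> * (\<Sum>s\<in>?L. t (maxel r B) r s * vB s) else 0)"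
        using AB by (cases "C = A"; cases "C = B") (auto simp: i_def sum_distrib_left mult_ac)
    qed
    also have "\<dots> = \<delta> * (\<Sum>s\<in>?L. t (maxel r A) r s * vA s) + \<delta> * (\<Sum>s\<in>?L. t (maxel r B) r s * vB s)"
      using A B by (simp add: sum.distrib)
    also have "\<dots> = \<delta> * (w r + 1)"
      unfolding eqA[OF r] eqB[OF r] w_def uB_def by (simp add: algebra_simps)
    finally have lhs: "(\<Sum>C\<in>?M. \<Sum>r'\<in>?L. \<delta> * i C r' * t (maxel r C) r r') = \<delta> * (w r + 1)" .
    have "w r * (W + 1) \<le> W * (w r + 1)" using wle[OF r] by (simp add: algebra_simps)
    hence "w r \<le> \<delta> * (w r + 1)" using Wpos unfolding \<delta>_def
      by (simp add: field_simps)
    thus False using lt lhs rhs by simp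
  qed
qed

end
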